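(* Every domain-complete space is convergence Choquet-complete. Every LCS-complete space is compactly Choquet-complete.
   Context: A space is domain-complete (resp. LCS-complete) if it is homeomorphic to a $G_\delta$ subset (countable intersection of open sets), with the subspace topology, of some continuous dcpo with its Scott topology (resp. of some locally compact sober space, locally compact meaning every point has a neighborhood base of compact saturated sets). The strong Choquet game on a space $X$: players $\beta$ and $\alpha$ alternate; at round $n$, $\beta$ picks a point $x_n$ and an open neighborhood $V_n$ of $x_n$ with $V_n\subseteq U_{n-1}$ (when $n\ge1$), and then $\alpha$ picks an open set $U_n$ with $x_n\in U_n\subseteq V_n$; $\alpha$'s strategies may depend on the entire history of the play. $X$ is Choquet-complete if $\alpha$ has a strategy ensuring $\bigcap_n U_n\neq\emptyset$; convergence Choquet-complete if $\alpha$ has a strategy ensuring that $(U_n)_{n\in\mathbb N}$ is a base of open neighborhoods of some point; compactly Choquet-complete if $\alpha$ has a strategy ensuring that $(U_n)_{n\in\mathbb N}$ is a base of open neighborhoods of some non-empty compact saturated set (i.e. every open set containing that set contains some $U_n$, and the set is contained in every $U_n$). *)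

theory Defs
  imports "HOL-Analysis.Analysis"
begin

definition directed :: "'a::order set \<Rightarrow> bool" where
  "directed D \<longleftrightarrow> D \<noteq> {} \<and> (\<forall>x\<in>D. \<forall>y\<in>D. \<exists>z\<in>D. x \<le> z \<and> y \<le> z)"

definition is_lub :: "'a::order set \<Rightarrow> 'a \<Rightarrow> bool" where
  "is_lub D s \<longleftrightarrow> (\<forall>x\<in>D. x \<le> s) \<and> (\<forall>u. (\<forall>x\<in>D. x \<le> u) \<longrightarrow> s \<le> u)"

definition dcpo :: "'a::order itself \<Rightarrow> bool" where
  "dcpo _ \<longleftrightarrow> (\<forall>D::'a set. directed D \<longrightarrow> (\<exists>s. is_lub D s))"

definition way_below :: "'a::order \<Rightarrow> 'a \<Rightarrow> bool" where
  "way_below x y \<longleftrightarrow>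
     (\<forall>D s. directed D \<longrightarrow> is_lub D s \<longrightarrow> y \<le> s \<longrightarrow> (\<exists>d\<in>D. x \<le> d))"

definition continuous_dcpo :: "'a::order itself \<Rightarrow> bool" where
  "continuous_dcpo T \<longleftrightarrow> dcpo T \<and>
     (\<forall>x::'a. directed {y. way_below y x} \<and> is_lub {y. way_below y x} x)"

definition scott_open :: "'a::order set \<Rightarrow> bool" where
  "scott_open U \<longleftrightarrow> (\<forall>x y. x \<in> U \<longrightarrow> x \<le> y \<longrightarrow> y \<in> U) \<and>
     (\<forall>D s. directed D \<longrightarrow> is_lub D s \<longrightarrow> s \<in> U \<longrightarrow> D \<inter> U \<noteq> {})"

lemma istopology_scott_open: "istopology (scott_open :: 'a::order set \<Rightarrow> bool)"
  unfolding istopology_def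
proof (intro conjI allI impI ballI)
  fix S T :: "'a set"
  assume S: "scott_open S" and T: "scott_open T"
  show "scott_open (S \<inter> T)"
    unfolding scott_open_def
  proof (intro conjI allI impI)
    fix x y assume "x \<in> S \<inter> T" "x \<le> y"
    then show "y \<in> S \<inter> T" using S T unfolding scott_open_def by blast
  next
    fix D s assume D: "directed D" and s: "is_lub D s" and sin: "s \<in> S \<inter> T"
    obtain a where a: "a \<in> D" "a \<in> S" using S D s sin unfolding scott_open_def by blast
    obtain b where b: "b \<in> D" "b \<in> T" using T D s sin unfolding scott_open_def by blast
    obtain c where c: "c \<in> D" "a \<le> c" "b \<le> c" using D a b unfolding directed_def by blast
    have "c \<in> S" "c \<in> T" using S T a b c unfolding scott_open_def by blast+
    then show "D \<inter> (S \<inter> T) \<noteq> {}" using c by blast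
  qed
next
  fix K :: "'a set set"
  assume K: "\<forall>U\<in>K. scott_open U"
  show "scott_open (\<Union>K)"
    unfolding scott_open_def
  proof (intro conjI allI impI)
    fix x y assume "x \<in> \<Union>K" "x \<le> y"
    then show "y \<in> \<Union>K" using K unfolding scott_open_def by blast
  next
    fix D s assume "directed D" "is_lub D s" "s \<in> \<Union>K"
    then show "D \<inter> \<Union>K \<noteq> {}" using K unfolding scott_open_def by blast
  qed
qed

definition scott_topology :: "'a::order topology" where
  "scott_topology = topology scott_open"

lemma openin_scott_topology: "openin (scott_topology :: 'a::order topology) U \<longleftrightarrow> scott_open U"
  unfolding scott_topology_def
  using topology_inverse'[OF istopology_scott_open[where 'a='a]] by simp

definition saturated_in :: "'a topology \<Rightarrow> 'a set \<Rightarrow> bool" where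
  "saturated_in X Q \<longleftrightarrow> Q \<subseteq> topspace X \<and> Q = \<Inter>{U. openin X U \<and> Q \<subseteq> U}"

definition irreducible_closed_in :: "'a topology \<Rightarrow> 'a set \<Rightarrow> bool" where
  "irreducible_closed_in X F \<longleftrightarrow> closedin X F \<and> F \<noteq> {} \<and>
     (\<forall>A B. closedin X A \<longrightarrow> closedin X B \<longrightarrow> F \<subseteq> A \<union> B \<longrightarrow> F \<subseteq> A \<or> F \<subseteq> B)"

definition sober_space :: "'a topology \<Rightarrow> bool" where
  "sober_space X \<longleftrightarrow> (\<forall>F. irreducible_closed_in X F \<longrightarrow>
      (\<exists>!x. x \<in> topspace X \<and> F = X closure_of {x}))"

definition locally_compact_sat :: "'a topology \<Rightarrow> bool" where
  "locally_compact_sat X \<longleftrightarrow> (\<forall>x\<in>topspace X. \<forall>U. openin X U \<and> x \<in> U \<longrightarrow>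
      (\<exists>Q. compactin X Q \<and> saturated_in X Q \<and> x \<in> X interior_of Q \<and> Q \<subseteq> U))"

text \<open>A strategy for player alpha maps the history of all previous rounds
  (triples \<open>(x_i, V_i, U_i)\<close>) and the current move \<open>(x_n, V_n)\<close> of beta
  to alpha's answer \<open>U_n\<close>.\<close>
type_synonym 'a alpha_strategy = "('a \<times> 'a set \<times> 'a set) list \<Rightarrow> 'a \<Rightarrow> 'a set \<Rightarrow> 'a set"

definition beta_legal :: "'a topology \<Rightarrow> (nat \<Rightarrow> 'a) \<Rightarrow> (nat \<Rightarrow> 'a set) \<Rightarrow> (nat \<Rightarrow> 'a set) \<Rightarrow> nat \<Rightarrow> bool" where
  "beta_legal X x V U k \<longleftrightarrow> x k \<in> topspace X \<and> openin X (V k) \<and> x k \<in> V k \<and>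
     (k > 0 \<longrightarrow> V k \<subseteq> U (k - 1))"

definition alpha_wins_with :: "'a topology \<Rightarrow> 'a alpha_strategy \<Rightarrow> ((nat \<Rightarrow> 'a set) \<Rightarrow> bool) \<Rightarrow> bool" where
  "alpha_wins_with X \<sigma> W \<longleftrightarrow> (\<forall>x V U.
     (\<forall>n. U n = \<sigma> (map (\<lambda>i. (x i, V i, U i)) [0..<n]) (x n) (V n)) \<longrightarrow>
     (\<forall>n. (\<forall>k\<le>n. beta_legal X x V U k) \<longrightarrow> openin X (U n) \<and> x n \<in> U n \<and> U n \<subseteq> V n) \<and>
     ((\<forall>n. beta_legal X x V U n) \<longrightarrow> W U))"

definition choquet_complete :: "'a topology \<Rightarrow> bool" where
  "choquet_complete X \<longleftrightarrow> (\<exists>\<sigma>. alpha_wins_with X \<sigma> (\<lambda>U. (\<Inter>n. U n) \<noteq> {}))"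

definition convergence_choquet_complete :: "'a topology \<Rightarrow> bool" where
  "convergence_choquet_complete X \<longleftrightarrow> (\<exists>\<sigma>. alpha_wins_with X \<sigma> (\<lambda>U.
     \<exists>p\<in>topspace X. (\<forall>n. p \<in> U n) \<and> (\<forall>W. openin X W \<and> p \<in> W \<longrightarrow> (\<exists>n. U n \<subseteq> W))))"

definition compactly_choquet_complete :: "'a topology \<Rightarrow> bool" where
  "compactly_choquet_complete X \<longleftrightarrow> (\<exists>\<sigma>. alpha_wins_with X \<sigma> (\<lambda>U.
     \<exists>Q. Q \<noteq> {} \<and> compactin X Q \<and> saturated_in X Q \<and> (\<forall>n. Q \<subseteq> U n) \<and>
         (\<forall>W. openin X W \<and> Q \<subseteq> W \<longrightarrow> (\<exists>n. U n \<subseteq> W))))"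

end

theory Submission
  imports Defs
begin


lemma hm_facts:
  assumes hm: "homeomorphic_maps X S f g"
  shows "\<And>x. x \<in> topspace X \<Longrightarrow> f x \<in> topspace S"
    and "\<And>y. y \<in> topspace S \<Longrightarrow> g y \<in> topspace X"
    and "\<And>x. x \<in> topspace X \<Longrightarrow> g (f x) = x"
    and "\<And>y. y \<in> topspace S \<Longrightarrow> f (g y) = y"
    and "\<And>A. openin X A \<Longrightarrow> openin S (f ` A)"
    and "\<And>B. openin S B \<Longrightarrow> openin X (g ` B)"
    and "continuous_map S X g"
proof -
  have c1: "continuous_map X S f" and c2: "continuous_map S X g"
    using hm by (auto simp: homeomorphic_maps_def)
  show "\<And>x. x \<in> topspace X \<Longrightarrow> f x \<in> topspace S"
    using continuous_map_image_subset_topspace[OF c1] by blast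
  show "\<And>y. y \<in> topspace S \<Longrightarrow> g y \<in> topspace X"
    using continuous_map_image_subset_topspace[OF c2] by blast
  show "\<And>x. x \<in> topspace X \<Longrightarrow> g (f x) = x" "\<And>y. y \<in> topspace S \<Longrightarrow> f (g y) = y"
    using hm by (auto simp: homeomorphic_maps_def)
  show "openin S (f ` A)" if "openin X A" for A
    using homeomorphic_map_openness[OF homeomorphic_maps_imp_map[OF hm] openin_subset[OF that]] that by simp
  have hm2: "homeomorphic_maps S X g f" using homeomorphic_maps_sym[THEN iffD1, OF hm] .
  show "openin X (g ` B)" if "openin S B" for B
    using homeomorphic_map_openness[OF homeomorphic_maps_imp_map[OF hm2] openin_subset[OF that]] that by simp
  show "continuous_map S X g" by (rule c2)
qed

lemma transfer:
  assumes hm: "homeomorphic_maps X S f g"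
  and win: "alpha_wins_with S \<sigma> WS"
  and sub: "\<And>h a B. \<sigma> h a B \<subseteq> topspace S"
  and imp: "\<And>U'. (\<forall>n. openin S (U' n)) \<Longrightarrow> WS U' \<Longrightarrow> WX (\<lambda>n. g ` U' n)"
  shows "alpha_wins_with X (\<lambda>h a B. g ` \<sigma> (map (\<lambda>(a,B,C). (f a, f`B, f`C)) h) (f a) (f`B)) WX"
  unfolding alpha_wins_with_def
proof (intro allI impI)
  fix x V U
  assume U: "\<forall>n. U n = g ` \<sigma> (map (\<lambda>(a,B,C). (f a, f`B, f`C)) (map (\<lambda>i. (x i, V i, U i)) [0..<n])) (f (x n)) (f ` V n)"
  note F = hm_facts[OF hm]
  define x' where "x' = (\<lambda>n. f (x n))"
  define V' where "V' = (\<lambda>n. f ` V n)"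
  define U' where "U' = (\<lambda>n. f ` U n)"
  have hist: "map (\<lambda>(a,B,C). (f a, f`B, f`C)) (map (\<lambda>i. (x i, V i, U i)) [0..<n]) = map (\<lambda>i. (x' i, V' i, U' i)) [0..<n]" for n
    by (simp add: x'_def V'_def U'_def)
  have fg: "f ` g ` A = A" if "A \<subseteq> topspace S" for A
  proof -
    have "f ` g ` A = (\<lambda>y. f (g y)) ` A" by (simp add: image_image)
    also have "\<dots> = id ` A"
      using that F(4) by (intro image_cong) auto
    also have "\<dots> = A" by simp
    finally show ?thesis .
  qed
  have U'eq: "\<forall>n. U' n = \<sigma> (map (\<lambda>i. (x' i, V' i, U' i)) [0..<n]) (x' n) (V' n)"
  proof
    fix n
    have "U' n = f ` g ` \<sigma> (map (\<lambda>i. (x' i, V' i, U' i)) [0..<n]) (x' n) (V' n)"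
      unfolding U'_def by (subst U[rule_format, of n]) (simp only: hist x'_def V'_def U'_def)
    then show "U' n = \<sigma> (map (\<lambda>i. (x' i, V' i, U' i)) [0..<n]) (x' n) (V' n)"
      using fg sub by simp
  qed
  have Ueq: "U n = g ` U' n" for n
    by (subst U[rule_format, of n], subst U'eq[rule_format, of n]) (simp only: hist x'_def V'_def)
  have W: "(\<forall>n. (\<forall>k\<le>n. beta_legal S x' V' U' k) \<longrightarrow> openin S (U' n) \<and> x' n \<in> U' n \<and> U' n \<subseteq> V' n) \<and>
     ((\<forall>n. beta_legal S x' V' U' n) \<longrightarrow> WS U')"
    using win[unfolded alpha_wins_with_def, rule_format, where x=x' and V=V' and U=U', OF U'eq[rule_format]] .
  have W1: "openin S (U' n) \<and> x' n \<in> U' n \<and> U' n \<subseteq> V' n" if "\<forall>k\<le>n. beta_legal S x' V' U' k" for n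
    using W that by (elim conjE) (erule allE, erule mp)
  have leg: "beta_legal S x' V' U' k" if "beta_legal X x V U k" for k
  proof -
    have a: "x k \<in> topspace X" "openin X (V k)" "x k \<in> V k" "k > 0 \<longrightarrow> V k \<subseteq> U (k - 1)"
      using that unfolding beta_legal_def by blast+
    show ?thesis unfolding beta_legal_def x'_def V'_def U'_def
      using F(1)[OF a(1)] F(5)[OF a(2)] a(3) a(4) by (intro conjI impI image_mono) auto
  qed
  have alpha: "openin X (U n) \<and> x n \<in> U n \<and> U n \<subseteq> V n" if "\<forall>k\<le>n. beta_legal X x V U k" for n
  proof -
    have "\<forall>k\<le>n. beta_legal S x' V' U' k" using leg that by blast
    then have L: "openin S (U' n)" "x' n \<in> U' n" "U' n \<subseteq> V' n" using W1 by blast+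
    have xn: "x n \<in> topspace X" "openin X (V n)" using that unfolding beta_legal_def by auto
    have "openin X (U n)" using L(1) F(6) Ueq by simp
    moreover have "x n \<in> U n"
    proof -
      have "g (f (x n)) \<in> g ` U' n" using L(2) unfolding x'_def by (rule imageI)
      then show ?thesis using F(3)[OF xn(1)] Ueq by simp
    qed
    moreover have "U n \<subseteq> V n"
    proof
      fix z assume "z \<in> U n"
      then obtain w where "w \<in> U' n" "z = g w" using Ueq by blast
      then obtain v where "v \<in> V n" "w = f v" using L(3) V'_def by blast
      then show "z \<in> V n" using \<open>z = g w\<close> F(3) openin_subset[OF xn(2)] by auto
    qed
    ultimately show ?thesis by blast
  qed
  show "(\<forall>n. (\<forall>k\<le>n. beta_legal X x V U k) \<longrightarrow> openin X (U n) \<and> x n \<in> U n \<and> U n \<subseteq> V n) \<and>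
        ((\<forall>n. beta_legal X x V U n) \<longrightarrow> WX U)"
  proof (rule conjI)
    show "\<forall>n. (\<forall>k\<le>n. beta_legal X x V U k) \<longrightarrow> openin X (U n) \<and> x n \<in> U n \<and> U n \<subseteq> V n"
      using alpha by (intro allI impI)
  next
    show "(\<forall>n. beta_legal X x V U n) \<longrightarrow> WX U"
    proof
    assume all: "\<forall>n. beta_legal X x V U n"
    have legS: "beta_legal S x' V' U' n" for n using leg[OF all[rule_format, of n]] .
    have "WS U'" using W legS by (elim conjE) (erule mp, rule allI)
    have "openin S (U' n)" for n
    proof -
      have "\<forall>k\<le>n. beta_legal S x' V' U' k" using legS by (intro allI impI)
      then show ?thesis using W1 by blast
    qed
    then have "WX (\<lambda>n. g ` U' n)" using imp \<open>WS U'\<close> by blast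
    moreover have "(\<lambda>n. g ` U' n) = U" using Ueq by auto
    ultimately show "WX U" by simp
    qed
  qed
qed



lemma wbD: "way_below x y \<Longrightarrow> directed D \<Longrightarrow> is_lub D s \<Longrightarrow> y \<le> s \<Longrightarrow> \<exists>d\<in>D. x \<le> d"
  unfolding way_below_def by blast

lemma scott_openD1: "scott_open U \<Longrightarrow> x \<in> U \<Longrightarrow> x \<le> y \<Longrightarrow> y \<in> U"
  unfolding scott_open_def by blast

lemma scott_openD2: "scott_open U \<Longrightarrow> directed D \<Longrightarrow> is_lub D s \<Longrightarrow> s \<in> U \<Longrightarrow> \<exists>d\<in>D. d \<in> U"
  unfolding scott_open_def by blast

lemma wb_le: "way_below (x::'a::order) y \<Longrightarrow> x \<le> y"
proof -
  assume w: "way_below x y"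
  have "directed {y}" by (simp add: directed_def)
  moreover have "is_lub {y} y" by (simp add: is_lub_def)
  ultimately show "x \<le> y" using wbD[OF w, of "{y}" y] by simp
qed

lemma wb_mono: "(a::'a::order) \<le> x \<Longrightarrow> way_below x y \<Longrightarrow> y \<le> b \<Longrightarrow> way_below a b"
  unfolding way_below_def
proof (intro allI impI)
  fix D s assume ax: "a \<le> x" and w: "\<forall>D s. directed D \<longrightarrow> is_lub D s \<longrightarrow> y \<le> s \<longrightarrow> (\<exists>d\<in>D. x \<le> d)"
    and yb: "y \<le> b" and D: "directed D" "is_lub D s" "b \<le> s"
  have "y \<le> s" using yb D(3) by (rule order_trans)
  then obtain d where "d \<in> D" "x \<le> d" using w D by blast
  then show "\<exists>d\<in>D. a \<le> d" using order_trans[OF ax] by blast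
qed

lemma wb_right: "way_below (y::'a::order) a \<Longrightarrow> a \<le> b \<Longrightarrow> way_below y b"
  by (rule wb_mono[OF order_refl])

lemma wb_left: "(a::'a::order) \<le> y \<Longrightarrow> way_below y b \<Longrightarrow> way_below a b"
  by (rule wb_mono[OF _ _ order_refl])

lemma approx:
  assumes "continuous_dcpo TYPE('a::order)"
  shows "directed {y. way_below y (x::'a)}" "is_lub {y. way_below y x} x"
  using assms unfolding continuous_dcpo_def by auto

lemma interpolate:
  assumes cd: "continuous_dcpo TYPE('a::order)" and yx: "way_below y (x::'a)"
  shows "\<exists>z. way_below y z \<and> way_below z x"
proof -
  define D where "D = {w::'a. \<exists>z. way_below w z \<and> way_below z x}"
  have dir: "directed D"
    unfolding directed_def
  proof (intro conjI ballI)
    obtain z where z: "way_below z x" using approx(1)[OF cd, of x] unfolding directed_def by blast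
    obtain w where "way_below w z" using approx(1)[OF cd, of z] unfolding directed_def by blast
    then show "D \<noteq> {}" using z unfolding D_def by blast
  next
    fix w1 w2 assume "w1 \<in> D" "w2 \<in> D"
    then obtain z1 z2 where h: "way_below w1 z1" "way_below z1 x" "way_below w2 z2" "way_below z2 x"
      unfolding D_def by blast
    obtain z3 where z3: "way_below z3 x" "z1 \<le> z3" "z2 \<le> z3"
      using approx(1)[OF cd, of x] h unfolding directed_def by blast
    have a1: "way_below w1 z3" using wb_right[OF h(1) z3(2)] .
    have a2: "way_below w2 z3" using wb_right[OF h(3) z3(3)] .
    obtain d1 where d1: "way_below d1 z3" "w1 \<le> d1"
      using wbD[OF a1 approx[OF cd, of z3] order_refl] by blast
    obtain d2 where d2: "way_below d2 z3" "w2 \<le> d2"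
      using wbD[OF a2 approx[OF cd, of z3] order_refl] by blast
    obtain d where d: "way_below d z3" "d1 \<le> d" "d2 \<le> d"
      using approx(1)[OF cd, of z3] d1 d2 unfolding directed_def by blast
    have "d \<in> D" using d(1) z3(1) unfolding D_def by blast
    moreover have "w1 \<le> d" "w2 \<le> d" using order_trans[OF d1(2) d(2)] order_trans[OF d2(2) d(3)] by blast+
    ultimately show "\<exists>z\<in>D. w1 \<le> z \<and> w2 \<le> z" by blast
  qed
  have lub: "is_lub D x"
    unfolding is_lub_def
  proof (intro conjI allI impI ballI)
    fix w assume "w \<in> D"
    then obtain z where "way_below w z" "way_below z x" unfolding D_def by blast
    then show "w \<le> x" using order_trans[OF wb_le wb_le] by blast
  next
    fix u assume u: "\<forall>w\<in>D. w \<le> u"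
    have "z \<le> u" if z: "way_below z x" for z
    proof -
      have "\<forall>w\<in>{w. way_below w z}. w \<le> u" using u z unfolding D_def by blast
      then show "z \<le> u" using approx(2)[OF cd, of z] unfolding is_lub_def by blast
    qed
    then show "x \<le> u" using approx(2)[OF cd, of x] unfolding is_lub_def by blast
  qed
  obtain d where "d \<in> D" "y \<le> d" using wbD[OF yx dir lub order_refl] by blast
  then obtain z where "way_below d z" "way_below z x" unfolding D_def by blast
  then show ?thesis using wb_left[OF \<open>y \<le> d\<close>] by blast
qed

lemma scott_open_wb:
  assumes cd: "continuous_dcpo TYPE('a::order)"
  shows "scott_open {z::'a. way_below y z}"
  unfolding scott_open_def
proof (intro conjI allI impI)
  fix a b :: 'a assume "a \<in> {z. way_below y z}" "a \<le> b"
  then show "b \<in> {z. way_below y z}" using wb_right[of y a b] by simp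
next
  fix D and s :: 'a assume D: "directed D" "is_lub D s" "s \<in> {z. way_below y z}"
  then obtain z where z: "way_below y z" "way_below z s" using interpolate[OF cd] by blast
  then obtain d where "d \<in> D" "z \<le> d" using wbD[OF z(2) D(1) D(2) order_refl] by blast
  then have "way_below y d" using wb_right[OF z(1)] by blast
  then show "D \<inter> {z. way_below y z} \<noteq> {}" using \<open>d \<in> D\<close> by blast
qed

lemma approx_open:
  assumes cd: "continuous_dcpo TYPE('a::order)" and Op: "scott_open Op" and x: "(x::'a) \<in> Op"
  shows "\<exists>y. way_below y x \<and> y \<in> Op"
  using scott_openD2[OF Op approx[OF cd, of x] x] by blast

lemma scott_open_UNIV: "scott_open UNIV"
  unfolding scott_open_def directed_def by auto

lemma scott_open_Int: "scott_open A \<Longrightarrow> scott_open B \<Longrightarrow> scott_open (A \<inter> B)"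
  using openin_Int[of scott_topology A B] by (simp add: openin_scott_topology)

lemma topspace_scott: "topspace (scott_topology :: 'a::order topology) = UNIV"
proof -
  have "openin (scott_topology :: 'a::order topology) UNIV"
    using scott_open_UNIV by (simp add: openin_scott_topology)
  then show ?thesis using openin_subset by auto
qed



lemma dom_game:
  fixes Wn :: "nat \<Rightarrow> 'b::order set" and G :: "'b set"
  assumes cd: "continuous_dcpo TYPE('b)" and Wo: "\<And>n. scott_open (Wn n)" and G: "G = \<Inter>(range Wn)"
  shows "\<exists>\<sigma>. alpha_wins_with (subtopology scott_topology G) \<sigma> (\<lambda>U. \<exists>p\<in>topspace (subtopology scott_topology G). (\<forall>n. p \<in> U n) \<and>
            (\<forall>W. openin (subtopology scott_topology G) W \<and> p \<in> W \<longrightarrow> (\<exists>n. U n \<subseteq> W)))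
          \<and> (\<forall>h a B. \<sigma> h a B \<subseteq> topspace (subtopology scott_topology G))"
proof -
  define S where "S = subtopology (scott_topology :: 'b topology) G"
  have topS: "topspace S = G" by (simp add: S_def topspace_scott)
  have openS: "openin S A \<longleftrightarrow> (\<exists>T. scott_open T \<and> A = T \<inter> G)" for A
    by (simp add: S_def openin_subtopology openin_scott_topology)
  define P where "P = (\<lambda>yo n a B y. way_below y a \<and> y \<in> Wn n \<and> {z. y \<le> z} \<inter> G \<subseteq> B \<and>
                          (case yo of None \<Rightarrow> True | Some p \<Rightarrow> way_below p y))"
  define pick where "pick = (\<lambda>yo n a B. SOME y. P yo n a B y)"
  define step where "step = (\<lambda>(st::nat \<times> 'b option) (e::'b \<times> 'b set \<times> 'b set).
                              (Suc (fst st), Some (pick (snd st) (fst st) (fst e) (fst (snd e)))))"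
  define state where "state = (\<lambda>h. foldl step (0, None) h)"
  define \<sigma> where "\<sigma> = (\<lambda>h a B. {z. way_below (pick (snd (state h)) (length h) a B) z} \<inter> G)"
  have ex: "\<exists>y. P yo n a B y"
    if a: "a \<in> G" "openin S B" "a \<in> B" "case yo of None \<Rightarrow> True | Some p \<Rightarrow> way_below p a" for yo n a B
  proof -
    obtain T where T: "scott_open T" "B = T \<inter> G" using openS[THEN iffD1, OF a(2)] by blast
    define O2 where "O2 = (case yo of None \<Rightarrow> UNIV | Some p \<Rightarrow> {z. way_below p z})"
    have o2: "scott_open O2" by (cases yo) (simp_all add: O2_def scott_open_UNIV scott_open_wb[OF cd])
    have ao2: "a \<in> O2" using a(4) by (cases yo) (simp_all add: O2_def)
    have aw: "a \<in> Wn n" using a(1) G by blast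
    have op: "scott_open (T \<inter> Wn n \<inter> O2)" by (intro scott_open_Int T(1) Wo o2)
    have "a \<in> T \<inter> Wn n \<inter> O2" using ao2 aw a(3) T(2) by blast
    then obtain y where y: "way_below y a" "y \<in> T \<inter> Wn n \<inter> O2" using approx_open[OF cd op] by blast
    have "{z. y \<le> z} \<inter> G \<subseteq> B" using T(2) scott_openD1[OF T(1)] y(2) by blast
    moreover have "case yo of None \<Rightarrow> True | Some p \<Rightarrow> way_below p y" using y(2) by (cases yo) (auto simp: O2_def)
    ultimately have "P yo n a B y" using y unfolding P_def by blast
    then show ?thesis by blast
  qed
  have \<sigma>sub: "\<forall>h a B. \<sigma> h a B \<subseteq> topspace S" by (auto simp: \<sigma>_def topS)
  have "alpha_wins_with S \<sigma> (\<lambda>U. \<exists>p\<in>topspace S. (\<forall>n. p \<in> U n) \<and>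
            (\<forall>W. openin S W \<and> p \<in> W \<longrightarrow> (\<exists>n. U n \<subseteq> W)))"
    unfolding alpha_wins_with_def
  proof (intro allI impI)
    fix x V U
    assume U: "\<forall>n. U n = \<sigma> (map (\<lambda>i. (x i, V i, U i)) [0..<n]) (x n) (V n)"
    define F where "F = (\<lambda>i. (x i, V i, U i))"
    define yo where "yo = (\<lambda>n. snd (state (map F [0..<n])))"
    define y where "y = (\<lambda>n. pick (yo n) n (x n) (V n))"
    have fst_state: "fst (state (map F [0..<n])) = n" for n
      by (induction n) (simp_all add: state_def step_def split_beta)
    have yo0: "yo 0 = None" by (simp add: yo_def state_def)
    have yoS: "yo (Suc n) = Some (y n)" for n
    proof -
      have "state (map F [0..<Suc n]) = step (state (map F [0..<n])) (F n)"
        by (simp add: state_def)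
      then show ?thesis using fst_state[of n]
        by (simp add: yo_def y_def step_def split_beta F_def)
    qed
    have Ueq: "U n = {z. way_below (y n) z} \<inter> G" for n
    proof -
      have "U n = \<sigma> (map F [0..<n]) (x n) (V n)" using U[rule_format, of n] by (simp only: F_def)
      then show ?thesis by (simp add: \<sigma>_def y_def yo_def)
    qed
    have spec: "P (yo n) n (x n) (V n) (y n)" if leg: "beta_legal S x V U n" for n
    proof -
      have l: "x n \<in> G" "openin S (V n)" "x n \<in> V n" "n > 0 \<longrightarrow> V n \<subseteq> U (n - 1)"
        using leg topS unfolding beta_legal_def by auto
      have c: "case yo n of None \<Rightarrow> True | Some p \<Rightarrow> way_below p (x n)"
      proof (cases n)
        case 0 then show ?thesis by (simp add: yo0)
      next
        case (Suc m)
        then have "x n \<in> U m" using l(3,4) by auto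
        then show ?thesis using Suc Ueq yoS by simp
      qed
      show ?thesis unfolding y_def pick_def by (rule someI_ex[OF ex[OF l(1-3) c]])
    qed
    have alpha: "openin S (U n) \<and> x n \<in> U n \<and> U n \<subseteq> V n" if leg: "beta_legal S x V U n" for n
    proof -
      have P: "P (yo n) n (x n) (V n) (y n)" by (rule spec[OF leg])
      have xg: "x n \<in> G" using leg topS unfolding beta_legal_def by auto
      have "openin S (U n)" unfolding openS Ueq using scott_open_wb[OF cd] by blast
      moreover have "x n \<in> U n" using P xg unfolding Ueq P_def by simp
      moreover have "U n \<subseteq> V n"
      proof
        fix w assume "w \<in> U n"
        then have "way_below (y n) w" "w \<in> G" unfolding Ueq by auto
        then have "w \<in> {z. y n \<le> z} \<inter> G" using wb_le by blast
        then show "w \<in> V n" using P unfolding P_def by blast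
      qed
      ultimately show ?thesis by blast
    qed
    show "(\<forall>n. (\<forall>k\<le>n. beta_legal S x V U k) \<longrightarrow> openin S (U n) \<and> x n \<in> U n \<and> U n \<subseteq> V n) \<and>
          ((\<forall>n. beta_legal S x V U n) \<longrightarrow> (\<exists>p\<in>topspace S. (\<forall>n. p \<in> U n) \<and>
            (\<forall>W. openin S W \<and> p \<in> W \<longrightarrow> (\<exists>n. U n \<subseteq> W))))"
    proof (rule conjI)
      show "\<forall>n. (\<forall>k\<le>n. beta_legal S x V U k) \<longrightarrow> openin S (U n) \<and> x n \<in> U n \<and> U n \<subseteq> V n"
      proof (intro allI impI)
        fix n assume "\<forall>k\<le>n. beta_legal S x V U k"
        then have "beta_legal S x V U n" by simp
        then show "openin S (U n) \<and> x n \<in> U n \<and> U n \<subseteq> V n" by (rule alpha)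
      qed
    next
      show "(\<forall>n. beta_legal S x V U n) \<longrightarrow> (\<exists>p\<in>topspace S. (\<forall>n. p \<in> U n) \<and>
            (\<forall>W. openin S W \<and> p \<in> W \<longrightarrow> (\<exists>n. U n \<subseteq> W)))"
      proof
        assume all: "\<forall>n. beta_legal S x V U n"
        have Pn: "P (yo n) n (x n) (V n) (y n)" for n using spec all by blast
        have wbS: "way_below (y m) (y (Suc m))" for m
          using Pn[of "Suc m"] unfolding P_def yoS by simp
        have leS: "y m \<le> y (Suc m)" for m using wb_le[OF wbS] .
        have mono: "y m \<le> y n" if "m \<le> n" for m n
          using lift_Suc_mono_le[of y, OF leS that] .
        have dir: "directed (range y)"
          unfolding directed_def
        proof (intro conjI ballI)
          show "range y \<noteq> {}" by simp
        next
          fix a b assume "a \<in> range y" "b \<in> range y"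
          then obtain i j where "a = y i" "b = y j" by blast
          then have "a \<le> y (max i j)" "b \<le> y (max i j)" using mono by auto
          then show "\<exists>c\<in>range y. a \<le> c \<and> b \<le> c" by blast
        qed
        have "dcpo TYPE('b)" using cd unfolding continuous_dcpo_def by blast
        then obtain z where z: "is_lub (range y) z" using dir unfolding dcpo_def by blast
        have yz: "y n \<le> z" for n using z unfolding is_lub_def by blast
        have "z \<in> Wn n" for n
        proof -
          have "y n \<in> Wn n" using Pn[of n] unfolding P_def by blast
          then show ?thesis using scott_openD1[OF Wo] yz[of n] by blast
        qed
        then have zG: "z \<in> G" using G by blast
        have zU: "z \<in> U n" for n
        proof -
          have "way_below (y n) z" by (rule wb_right[OF wbS[of n] yz[of "Suc n"]])
          then show ?thesis using zG by (simp add: Ueq)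
        qed
        have nb: "\<exists>n. U n \<subseteq> W" if W: "openin S W" "z \<in> W" for W
        proof -
          obtain T where T: "scott_open T" "W = T \<inter> G" using openS[THEN iffD1, OF W(1)] by blast
          have "z \<in> T" using W(2) T(2) by blast
          then obtain d where "d \<in> range y" "d \<in> T" using scott_openD2[OF T(1) dir z] by blast
          then obtain n where n: "y n \<in> T" by blast
          have "U n \<subseteq> W"
          proof
            fix w assume "w \<in> U n"
            then have "way_below (y n) w" "w \<in> G" unfolding Ueq by auto
            then show "w \<in> W" using T scott_openD1[OF T(1) n wb_le] by blast
          qed
          then show ?thesis by blast
        qed
        show "\<exists>p\<in>topspace S. (\<forall>n. p \<in> U n) \<and> (\<forall>W. openin S W \<and> p \<in> W \<longrightarrow> (\<exists>n. U n \<subseteq> W))"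
          using zG topS zU nb by blast
      qed
    qed
  qed
  then show ?thesis using \<sigma>sub unfolding S_def by blast
qed



lemma compactin_cover:
  assumes "compactin Z K" "openin Z (\<Union>\<U>)" "\<And>U. U \<in> \<U> \<Longrightarrow> openin Z U" "K \<subseteq> \<Union>\<U>"
  shows "\<exists>\<F>. finite \<F> \<and> \<F> \<subseteq> \<U> \<and> K \<subseteq> \<Union>\<F>"
  using assms unfolding compactin_def by blast

lemma sober_wf:
  assumes sob: "sober_space Z" and cpt: "\<And>n. compactin Z (Q n)"
    and dec: "\<And>n. Q (Suc n) \<subseteq> Z interior_of (Q n)"
    and Wo: "openin Z W" and sub: "(\<Inter>n. Q n) \<subseteq> W"
  shows "\<exists>n. Q n \<subseteq> W"
proof (rule ccontr)
  assume nW: "\<not> (\<exists>n. Q n \<subseteq> W)"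
  have decS: "Q (Suc n) \<subseteq> Q n" for n using dec[of n] interior_of_subset[of Z "Q n"] by blast
  have decQ: "Q m \<subseteq> Q n" if "n \<le> m" for m n
    using lift_Suc_antimono_le[of Q, OF decS that] .
  define F where "F = (\<lambda>P. \<exists>n. Q n \<subseteq> P)"
  define M where "M = {P. openin Z P \<and> W \<subseteq> P \<and> \<not> F P}"
  have WM: "W \<in> M" using Wo nW unfolding M_def F_def by blast
  have ch: "\<Union>\<C> \<in> M" if C: "\<C> \<noteq> {}" "subset.chain M \<C>" for \<C>
  proof -
    have CM: "\<C> \<subseteq> M" using C(2) unfolding subset_chain_def by blast
    have op: "openin Z (\<Union>\<C>)" using CM unfolding M_def by blast
    have "W \<subseteq> \<Union>\<C>" using CM C(1) unfolding M_def by blast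
    moreover have "\<not> F (\<Union>\<C>)"
    proof
      assume "F (\<Union>\<C>)"
      then obtain n where n: "Q n \<subseteq> \<Union>\<C>" unfolding F_def by blast
      obtain \<F> where \<F>: "finite \<F>" "\<F> \<subseteq> \<C>" "Q n \<subseteq> \<Union>\<F>"
      proof -
        have opC: "\<And>U. U \<in> \<C> \<Longrightarrow> openin Z U" using CM unfolding M_def by blast
        show ?thesis using compactin_cover[OF cpt[of n] op opC n] that by blast
      qed
      show False
      proof (cases "\<F> = {}")
        case True
        then have "Q n = {}" using \<F>(3) by blast
        then have "Q n \<subseteq> W" by simp
        then show False using nW by blast
      next
        case False
        have c2: "\<forall>X\<in>\<C>. \<forall>Y\<in>\<C>. X \<subseteq> Y \<or> Y \<subseteq> X" using C(2) unfolding subset_chain_def by (elim conjE)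
        have "\<F> \<subseteq> M" using \<F>(2) CM by (rule subset_trans)
        moreover have "\<forall>X\<in>\<F>. \<forall>Y\<in>\<F>. X \<subseteq> Y \<or> Y \<subseteq> X" using c2 \<F>(2) by (simp add: subset_iff)
        ultimately have "subset.chain M \<F>" unfolding subset_chain_def by (intro conjI)
        then have "\<Union>\<F> \<in> \<F>" by (rule Union_in_chain[OF \<F>(1) False])
        then have "\<Union>\<F> \<in> M" using \<F>(2) CM by blast
        then show False using \<F>(3) unfolding M_def F_def by blast
      qed
    qed
    ultimately show ?thesis using op unfolding M_def by blast
  qed
  obtain P where P: "P \<in> M" and maxP: "\<And>X. X \<in> M \<Longrightarrow> P \<subseteq> X \<Longrightarrow> X = P"
    using subset_Zorn_nonempty[of M] WM ch by blast
  have Po: "openin Z P" and WP: "W \<subseteq> P" and nFP: "\<not> F P" using P unfolding M_def by blast+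
  have Ptop: "P \<subseteq> topspace Z" using openin_subset[OF Po] .
  have grow: "F (P \<union> U)" if U: "openin Z U" "\<not> U \<subseteq> P" for U
  proof (rule ccontr)
    assume "\<not> F (P \<union> U)"
    then have "P \<union> U \<in> M" using Po U(1) WP unfolding M_def by blast
    then have "P \<union> U = P" using maxP by blast
    then show False using U(2) by blast
  qed
  define C where "C = topspace Z - P"
  have Cclosed: "closedin Z C"
    unfolding C_def closedin_def using Po Ptop by (simp add: Diff_Diff_Int Int_absorb1)
  have irr: "irreducible_closed_in Z C"
    unfolding irreducible_closed_in_def
  proof (intro conjI allI impI)
    show "closedin Z C" by (rule Cclosed)
  next
    show "C \<noteq> {}"
    proof
      assume "C = {}"
      then have "topspace Z \<subseteq> P" unfolding C_def by blast
      then have "Q 0 \<subseteq> P" using compactin_subset_topspace[OF cpt[of 0]] by blast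
      then show False using nFP unfolding F_def by blast
    qed
  next
    fix A B assume A: "closedin Z A" and B: "closedin Z B" and CAB: "C \<subseteq> A \<union> B"
    show "C \<subseteq> A \<or> C \<subseteq> B"
    proof (rule ccontr)
      assume "\<not> (C \<subseteq> A \<or> C \<subseteq> B)"
      then obtain a b where a: "a \<in> C" "a \<notin> A" and b: "b \<in> C" "b \<notin> B" by blast
      define UA where "UA = topspace Z - A"
      define UB where "UB = topspace Z - B"
      have oA: "openin Z UA" using A unfolding UA_def closedin_def by blast
      have oB: "openin Z UB" using B unfolding UB_def closedin_def by blast
      have "a \<in> UA" "a \<notin> P" using a unfolding UA_def C_def by blast+
      then have "F (P \<union> UA)" using grow[OF oA] by blast
      then obtain n where n: "Q n \<subseteq> P \<union> UA" unfolding F_def by blast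
      have "b \<in> UB" "b \<notin> P" using b unfolding UB_def C_def by blast+
      then have "F (P \<union> UB)" using grow[OF oB] by blast
      then obtain m where m: "Q m \<subseteq> P \<union> UB" unfolding F_def by blast
      define k where "k = max n m"
      have "Q k \<subseteq> P \<union> UA" "Q k \<subseteq> P \<union> UB"
        using decQ[of n k] decQ[of m k] n m unfolding k_def by auto
      then have "Q k \<subseteq> P" using CAB unfolding UA_def UB_def C_def by blast
      then show False using nFP unfolding F_def by blast
    qed
  qed
  obtain x where x: "x \<in> topspace Z" "C = Z closure_of {x}"
    using sob irr unfolding sober_space_def by blast
  have xC: "x \<in> C" using closure_of_subset[of "{x}" Z] x by blast
  then have xP: "x \<notin> P" unfolding C_def by blast
  have inO: "x \<in> O2" if O2: "openin Z O2" "\<not> O2 \<subseteq> P" for O2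
  proof (rule ccontr)
    assume "x \<notin> O2"
    then have "{x} \<subseteq> topspace Z - O2" using x(1) by blast
    moreover have "closedin Z (topspace Z - O2)" using O2(1) by blast
    ultimately have "C \<subseteq> topspace Z - O2" using closure_of_minimal x(2) by metis
    then have "O2 \<subseteq> P" using openin_subset[OF O2(1)] unfolding C_def by blast
    then show False using O2(2) by blast
  qed
  have "x \<in> Q n" for n
  proof -
    have "\<not> Z interior_of (Q n) \<subseteq> P"
    proof
      assume "Z interior_of (Q n) \<subseteq> P"
      then have "Q (Suc n) \<subseteq> P" using dec[of n] by blast
      then show False using nFP unfolding F_def by blast
    qed
    then have "x \<in> Z interior_of (Q n)" using inO[OF openin_interior_of] by blast
    then show ?thesis using interior_of_subset[of Z "Q n"] by blast
  qed
  then have "x \<in> W" using sub by blast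
  then show False using WP xP by blast
qed



lemma lcs_game:
  fixes Z :: "'d topology" and Wn :: "nat \<Rightarrow> 'd set" and H :: "'d set"
  assumes sob: "sober_space Z" and lc: "locally_compact_sat Z"
    and Wo: "\<And>n. openin Z (Wn n)" and H: "H = \<Inter>(range Wn)"
  shows "\<exists>\<sigma>. alpha_wins_with (subtopology Z H) \<sigma> (\<lambda>U.
     \<exists>Q. Q \<noteq> {} \<and> compactin (subtopology Z H) Q \<and> saturated_in (subtopology Z H) Q \<and> (\<forall>n. Q \<subseteq> U n) \<and>
         (\<forall>W. openin (subtopology Z H) W \<and> Q \<subseteq> W \<longrightarrow> (\<exists>n. U n \<subseteq> W)))
          \<and> (\<forall>h a B. \<sigma> h a B \<subseteq> topspace (subtopology Z H))"
proof -
  define S where "S = subtopology Z H"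
  have Htop: "H \<subseteq> topspace Z" using H openin_subset[OF Wo[of 0]] by blast
  have topS: "topspace S = H" using Htop by (simp add: S_def Int_absorb1)
  have openS: "openin S A \<longleftrightarrow> (\<exists>T. openin Z T \<and> A = T \<inter> H)" for A
    by (simp add: S_def openin_subtopology)
  define P where "P = (\<lambda>yo n a B K. compactin Z K \<and> saturated_in Z K \<and> a \<in> Z interior_of K \<and> K \<subseteq> Wn n \<and>
                          K \<inter> H \<subseteq> B \<and> (case yo of None \<Rightarrow> True | Some K' \<Rightarrow> K \<subseteq> Z interior_of K'))"
  define pick where "pick = (\<lambda>yo n a B. SOME K. P yo n a B K)"
  define step where "step = (\<lambda>(st::nat \<times> 'd set option) (e::'d \<times> 'd set \<times> 'd set).
                              (Suc (fst st), Some (pick (snd st) (fst st) (fst e) (fst (snd e)))))"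
  define state where "state = (\<lambda>h. foldl step (0, None) h)"
  define \<sigma> where "\<sigma> = (\<lambda>h a B. Z interior_of (pick (snd (state h)) (length h) a B) \<inter> H)"
  have ex: "\<exists>K. P yo n a B K"
    if a: "a \<in> H" "openin S B" "a \<in> B" "case yo of None \<Rightarrow> True | Some K' \<Rightarrow> a \<in> Z interior_of K'" for yo n a B
  proof -
    obtain T where T: "openin Z T" "B = T \<inter> H" using openS[THEN iffD1, OF a(2)] by blast
    define O2 where "O2 = (case yo of None \<Rightarrow> topspace Z | Some K' \<Rightarrow> Z interior_of K')"
    have o2: "openin Z O2" by (cases yo) (simp_all add: O2_def)
    have atop: "a \<in> topspace Z" using a(1) Htop by blast
    have ao2: "a \<in> O2" using a(4) atop by (cases yo) (simp_all add: O2_def)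
    have aw: "a \<in> Wn n" using a(1) H by blast
    have op: "openin Z (T \<inter> Wn n \<inter> O2)" by (intro openin_Int T(1) Wo o2)
    have "a \<in> T \<inter> Wn n \<inter> O2" using ao2 aw a(3) T(2) by blast
    then obtain K where K: "compactin Z K" "saturated_in Z K" "a \<in> Z interior_of K" "K \<subseteq> T \<inter> Wn n \<inter> O2"
      using lc atop op unfolding locally_compact_sat_def by blast
    have "K \<inter> H \<subseteq> B" using T(2) K(4) by blast
    moreover have "case yo of None \<Rightarrow> True | Some K' \<Rightarrow> K \<subseteq> Z interior_of K'"
      using K(4) by (cases yo) (auto simp: O2_def)
    ultimately have "P yo n a B K" using K unfolding P_def by blast
    then show ?thesis by blast
  qed
  have \<sigma>sub: "\<forall>h a B. \<sigma> h a B \<subseteq> topspace S" by (auto simp: \<sigma>_def topS)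
  have "alpha_wins_with S \<sigma> (\<lambda>U.
     \<exists>Q. Q \<noteq> {} \<and> compactin S Q \<and> saturated_in S Q \<and> (\<forall>n. Q \<subseteq> U n) \<and>
         (\<forall>W. openin S W \<and> Q \<subseteq> W \<longrightarrow> (\<exists>n. U n \<subseteq> W)))"
    unfolding alpha_wins_with_def
  proof (intro allI impI)
    fix x V U
    assume U: "\<forall>n. U n = \<sigma> (map (\<lambda>i. (x i, V i, U i)) [0..<n]) (x n) (V n)"
    define F where "F = (\<lambda>i. (x i, V i, U i))"
    define yo where "yo = (\<lambda>n. snd (state (map F [0..<n])))"
    define y where "y = (\<lambda>n. pick (yo n) n (x n) (V n))"
    have fst_state: "fst (state (map F [0..<n])) = n" for n
      by (induction n) (simp_all add: state_def step_def split_beta)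
    have yo0: "yo 0 = None" by (simp add: yo_def state_def)
    have yoS: "yo (Suc n) = Some (y n)" for n
    proof -
      have "state (map F [0..<Suc n]) = step (state (map F [0..<n])) (F n)"
        by (simp add: state_def)
      then show ?thesis using fst_state[of n]
        by (simp add: yo_def y_def step_def split_beta F_def)
    qed
    have Ueq: "U n = Z interior_of (y n) \<inter> H" for n
    proof -
      have "U n = \<sigma> (map F [0..<n]) (x n) (V n)" using U[rule_format, of n] by (simp only: F_def)
      then show ?thesis by (simp add: \<sigma>_def y_def yo_def)
    qed
    have spec: "P (yo n) n (x n) (V n) (y n)" if leg: "beta_legal S x V U n" for n
    proof -
      have l: "x n \<in> H" "openin S (V n)" "x n \<in> V n" "n > 0 \<longrightarrow> V n \<subseteq> U (n - 1)"
        using leg topS unfolding beta_legal_def by auto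
      have c: "case yo n of None \<Rightarrow> True | Some K' \<Rightarrow> x n \<in> Z interior_of K'"
      proof (cases n)
        case 0 then show ?thesis by (simp add: yo0)
      next
        case (Suc m)
        then have "x n \<in> U m" using l(3,4) by auto
        then show ?thesis using Suc Ueq yoS by simp
      qed
      show ?thesis unfolding y_def pick_def by (rule someI_ex[OF ex[OF l(1-3) c]])
    qed
    have alpha: "openin S (U n) \<and> x n \<in> U n \<and> U n \<subseteq> V n" if leg: "beta_legal S x V U n" for n
    proof -
      have Pn: "P (yo n) n (x n) (V n) (y n)" by (rule spec[OF leg])
      have xg: "x n \<in> H" using leg topS unfolding beta_legal_def by auto
      have "openin S (U n)" unfolding openS Ueq using openin_interior_of by blast
      moreover have "x n \<in> U n" using Pn xg unfolding Ueq P_def by simp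
      moreover have "U n \<subseteq> V n"
      proof
        fix w assume "w \<in> U n"
        then have "w \<in> y n" "w \<in> H" unfolding Ueq using interior_of_subset[of Z "y n"] by auto
        then show "w \<in> V n" using Pn unfolding P_def by blast
      qed
      ultimately show ?thesis by blast
    qed
    show "(\<forall>n. (\<forall>k\<le>n. beta_legal S x V U k) \<longrightarrow> openin S (U n) \<and> x n \<in> U n \<and> U n \<subseteq> V n) \<and>
          ((\<forall>n. beta_legal S x V U n) \<longrightarrow> (\<exists>Q. Q \<noteq> {} \<and> compactin S Q \<and> saturated_in S Q \<and> (\<forall>n. Q \<subseteq> U n) \<and>
         (\<forall>W. openin S W \<and> Q \<subseteq> W \<longrightarrow> (\<exists>n. U n \<subseteq> W))))"
    proof (rule conjI)
      show "\<forall>n. (\<forall>k\<le>n. beta_legal S x V U k) \<longrightarrow> openin S (U n) \<and> x n \<in> U n \<and> U n \<subseteq> V n"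
      proof (intro allI impI)
        fix n assume "\<forall>k\<le>n. beta_legal S x V U k"
        then have "beta_legal S x V U n" by simp
        then show "openin S (U n) \<and> x n \<in> U n \<and> U n \<subseteq> V n" by (rule alpha)
      qed
    next
      show "(\<forall>n. beta_legal S x V U n) \<longrightarrow> (\<exists>Q. Q \<noteq> {} \<and> compactin S Q \<and> saturated_in S Q \<and> (\<forall>n. Q \<subseteq> U n) \<and>
         (\<forall>W. openin S W \<and> Q \<subseteq> W \<longrightarrow> (\<exists>n. U n \<subseteq> W)))"
      proof
        assume all: "\<forall>n. beta_legal S x V U n"
        have Pn: "P (yo n) n (x n) (V n) (y n)" for n using spec all by blast
        have cpt: "compactin Z (y n)" for n using Pn[of n] unfolding P_def by blast
        have sat: "saturated_in Z (y n)" for n using Pn[of n] unfolding P_def by blast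
        have xin: "x n \<in> Z interior_of (y n)" for n using Pn[of n] unfolding P_def by blast
        have yW: "y n \<subseteq> Wn n" for n using Pn[of n] unfolding P_def by blast
        have dec: "y (Suc n) \<subseteq> Z interior_of (y n)" for n
          using Pn[of "Suc n"] unfolding P_def yoS by simp
        have wf: "\<exists>n. y n \<subseteq> W" if "openin Z W" "(\<Inter>n. y n) \<subseteq> W" for W
          by (rule sober_wf[OF sob cpt dec that])
        define Qi where "Qi = (\<Inter>n. y n)"
        have QiH: "Qi \<subseteq> H" unfolding Qi_def H using yW by blast
        have Qiy: "Qi \<subseteq> y n" for n unfolding Qi_def by blast
        have ne: "Qi \<noteq> {}"
        proof
          assume "Qi = {}"
          then obtain n where "y n \<subseteq> {}" using wf[of "{}"] unfolding Qi_def by auto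
          then show False using xin[of n] interior_of_subset[of Z "y n"] by blast
        qed
        have cZ: "compactin Z Qi"
          unfolding compactin_def
        proof (intro conjI allI impI)
          show "Qi \<subseteq> topspace Z" using Qiy[of 0] compactin_subset_topspace[OF cpt[of 0]] by blast
        next
          fix \<U> assume u: "(\<forall>U\<in>\<U>. openin Z U) \<and> Qi \<subseteq> \<Union>\<U>"
          have "openin Z (\<Union>\<U>)" using u by blast
          then obtain n where n: "y n \<subseteq> \<Union>\<U>" using wf u unfolding Qi_def by blast
          then obtain \<F> where "finite \<F>" "\<F> \<subseteq> \<U>" "y n \<subseteq> \<Union>\<F>"
            using cpt[of n] u unfolding compactin_def by blast
          then show "\<exists>\<F>. finite \<F> \<and> \<F> \<subseteq> \<U> \<and> Qi \<subseteq> \<Union>\<F>" using Qiy[of n] by blast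
        qed
        have cS: "compactin S Qi" unfolding S_def compactin_subtopology using cZ QiH by blast
        have sS: "saturated_in S Qi"
          unfolding saturated_in_def
        proof (rule conjI)
          show "Qi \<subseteq> topspace S" using QiH topS by simp
        next
          show "Qi = \<Inter>{U. openin S U \<and> Qi \<subseteq> U}"
          proof
            show "Qi \<subseteq> \<Inter>{U. openin S U \<and> Qi \<subseteq> U}" by blast
          next
            show "\<Inter>{U. openin S U \<and> Qi \<subseteq> U} \<subseteq> Qi"
            proof
              fix p assume p: "p \<in> \<Inter>{U. openin S U \<and> Qi \<subseteq> U}"
              have "p \<in> y n" for n
              proof -
                have "p \<in> U" if "openin Z U" "y n \<subseteq> U" for U
                proof -
                  have "openin S (U \<inter> H)" using openS that(1) by blast
                  moreover have "Qi \<subseteq> U \<inter> H" using Qiy[of n] that(2) QiH by blast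
                  ultimately show "p \<in> U" using p by blast
                qed
                then have "p \<in> \<Inter>{U. openin Z U \<and> y n \<subseteq> U}" by blast
                moreover have "y n = \<Inter>{U. openin Z U \<and> y n \<subseteq> U}"
                  using sat[of n] unfolding saturated_in_def by blast
                ultimately show "p \<in> y n" by simp
              qed
              then show "p \<in> Qi" unfolding Qi_def by blast
            qed
          qed
        qed
        have QU: "Qi \<subseteq> U n" for n
          unfolding Ueq using Qiy[of "Suc n"] dec[of n] QiH by blast
        have nb: "\<exists>n. U n \<subseteq> W" if W: "openin S W" "Qi \<subseteq> W" for W
        proof -
          obtain T where T: "openin Z T" "W = T \<inter> H" using openS[THEN iffD1, OF W(1)] by blast
          have "Qi \<subseteq> T" using W(2) T(2) by blast
          then obtain n where n: "y n \<subseteq> T" using wf[OF T(1)] unfolding Qi_def by blast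
          have "U n \<subseteq> W" unfolding Ueq T(2) using n interior_of_subset[of Z "y n"] by blast
          then show ?thesis by blast
        qed
        show "\<exists>Q. Q \<noteq> {} \<and> compactin S Q \<and> saturated_in S Q \<and> (\<forall>n. Q \<subseteq> U n) \<and>
         (\<forall>W. openin S W \<and> Q \<subseteq> W \<longrightarrow> (\<exists>n. U n \<subseteq> W))"
        proof (rule exI[of _ Qi], intro conjI allI impI)
          show "Qi \<noteq> {}" by (rule ne)
          show "compactin S Qi" by (rule cS)
          show "saturated_in S Qi" by (rule sS)
          fix n show "Qi \<subseteq> U n" by (rule QU)
        next
          fix W assume "openin S W \<and> Qi \<subseteq> W"
          then show "\<exists>n. U n \<subseteq> W" using nb by blast
        qed
      qed
    qed
  qed
  then show ?thesis using \<sigma>sub unfolding S_def by blast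
qed



lemma part1:
  fixes X :: "'a topology" and G :: "'b::order set"
  assumes cd: "continuous_dcpo TYPE('b)" and gd: "gdelta_in scott_topology G"
    and hs: "X homeomorphic_space subtopology scott_topology G"
  shows "convergence_choquet_complete X"
proof -
  define S where "S = subtopology (scott_topology :: 'b topology) G"
  obtain Wn :: "nat \<Rightarrow> 'b set" where Wn: "\<forall>n. openin (scott_topology :: 'b topology) (Wn n)" "\<Inter>(range Wn) = G"
    using gdelta_in_descending[THEN iffD1, OF gd] by blast
  have Wo: "scott_open (Wn n)" for n using Wn(1) by (simp add: openin_scott_topology)
  obtain \<sigma> where \<sigma>: "alpha_wins_with S \<sigma> (\<lambda>U. \<exists>p\<in>topspace S. (\<forall>n. p \<in> U n) \<and>
            (\<forall>W. openin S W \<and> p \<in> W \<longrightarrow> (\<exists>n. U n \<subseteq> W)))" "\<forall>h a B. \<sigma> h a B \<subseteq> topspace S"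
    using dom_game[OF cd Wo Wn(2)[symmetric]] unfolding S_def by blast
  obtain f g where hm: "homeomorphic_maps X S f g" using hs unfolding S_def homeomorphic_space_def by blast
  note F = hm_facts[OF hm]
  have "alpha_wins_with X (\<lambda>h a B. g ` \<sigma> (map (\<lambda>(a,B,C). (f a, f`B, f`C)) h) (f a) (f`B))
     (\<lambda>U. \<exists>p\<in>topspace X. (\<forall>n. p \<in> U n) \<and> (\<forall>W. openin X W \<and> p \<in> W \<longrightarrow> (\<exists>n. U n \<subseteq> W)))"
  proof (rule transfer[OF hm \<sigma>(1)])
    show "\<And>h a B. \<sigma> h a B \<subseteq> topspace S" using \<sigma>(2) by blast
  next
    fix U' :: "nat \<Rightarrow> 'b set"
    assume "\<forall>n. openin S (U' n)" and "\<exists>p\<in>topspace S. (\<forall>n. p \<in> U' n) \<and> (\<forall>W. openin S W \<and> p \<in> W \<longrightarrow> (\<exists>n. U' n \<subseteq> W))"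
    then obtain p where p: "p \<in> topspace S" "\<And>n. p \<in> U' n" "\<And>W. openin S W \<Longrightarrow> p \<in> W \<Longrightarrow> \<exists>n. U' n \<subseteq> W"
      by blast
    show "\<exists>q\<in>topspace X. (\<forall>n. q \<in> g ` U' n) \<and> (\<forall>W. openin X W \<and> q \<in> W \<longrightarrow> (\<exists>n. g ` U' n \<subseteq> W))"
    proof (rule bexI[of _ "g p"], intro conjI allI impI)
      show "g p \<in> topspace X" using F(2)[OF p(1)] .
      fix n show "g p \<in> g ` U' n" using p(2)[of n] by (rule imageI)
    next
      fix W assume W: "openin X W \<and> g p \<in> W"
      have "openin S (f ` W)" using F(5) W by blast
      moreover have "p \<in> f ` W" using W F(4)[OF p(1)] by (metis imageI)
      ultimately obtain n where n: "U' n \<subseteq> f ` W" using p(3) by blast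
      have "g ` U' n \<subseteq> W"
      proof
        fix z assume "z \<in> g ` U' n"
        then obtain w where "w \<in> W" "z = g (f w)" using n by blast
        moreover have "w \<in> topspace X" using \<open>w \<in> W\<close> W openin_subset by blast
        ultimately show "z \<in> W" using F(3) by simp
      qed
      then show "\<exists>n. g ` U' n \<subseteq> W" by blast
    qed
  qed
  then show ?thesis unfolding convergence_choquet_complete_def by blast
qed

lemma part2:
  fixes Y :: "'c topology" and Z :: "'d topology" and H :: "'d set"
  assumes sob: "sober_space Z" and lc: "locally_compact_sat Z" and gd: "gdelta_in Z H"
    and hs: "Y homeomorphic_space subtopology Z H"
  shows "compactly_choquet_complete Y"
proof -
  define S where "S = subtopology Z H"
  obtain Wn :: "nat \<Rightarrow> 'd set" where Wn: "\<forall>n. openin Z (Wn n)" "\<Inter>(range Wn) = H"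
    using gdelta_in_descending[THEN iffD1, OF gd] by blast
  have Wo: "openin Z (Wn n)" for n using Wn(1) by blast
  obtain \<sigma> where \<sigma>: "alpha_wins_with S \<sigma> (\<lambda>U.
     \<exists>Q. Q \<noteq> {} \<and> compactin S Q \<and> saturated_in S Q \<and> (\<forall>n. Q \<subseteq> U n) \<and>
         (\<forall>W. openin S W \<and> Q \<subseteq> W \<longrightarrow> (\<exists>n. U n \<subseteq> W)))" "\<forall>h a B. \<sigma> h a B \<subseteq> topspace S"
    using lcs_game[OF sob lc Wo Wn(2)[symmetric]] unfolding S_def by blast
  obtain f g where hm: "homeomorphic_maps Y S f g" using hs unfolding S_def homeomorphic_space_def by blast
  note F = hm_facts[OF hm]
  have "alpha_wins_with Y (\<lambda>h a B. g ` \<sigma> (map (\<lambda>(a,B,C). (f a, f`B, f`C)) h) (f a) (f`B))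
     (\<lambda>U. \<exists>Q. Q \<noteq> {} \<and> compactin Y Q \<and> saturated_in Y Q \<and> (\<forall>n. Q \<subseteq> U n) \<and>
         (\<forall>W. openin Y W \<and> Q \<subseteq> W \<longrightarrow> (\<exists>n. U n \<subseteq> W)))"
  proof (rule transfer[OF hm \<sigma>(1)])
    show "\<And>h a B. \<sigma> h a B \<subseteq> topspace S" using \<sigma>(2) by blast
  next
    fix U' :: "nat \<Rightarrow> 'd set"
    assume "\<forall>n. openin S (U' n)" and "\<exists>Q. Q \<noteq> {} \<and> compactin S Q \<and> saturated_in S Q \<and> (\<forall>n. Q \<subseteq> U' n) \<and>
         (\<forall>W. openin S W \<and> Q \<subseteq> W \<longrightarrow> (\<exists>n. U' n \<subseteq> W))"
    then obtain Q where QQ: "Q \<noteq> {} \<and> compactin S Q \<and> saturated_in S Q \<and> (\<forall>n. Q \<subseteq> U' n) \<and>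
         (\<forall>W. openin S W \<and> Q \<subseteq> W \<longrightarrow> (\<exists>n. U' n \<subseteq> W))"
      by (elim exE)
    have Q: "Q \<noteq> {}" "compactin S Q" "saturated_in S Q" "\<And>n. Q \<subseteq> U' n"
      "\<And>W. openin S W \<Longrightarrow> Q \<subseteq> W \<Longrightarrow> \<exists>n. U' n \<subseteq> W"
      using QQ by auto
    have Qtop: "Q \<subseteq> topspace S" using compactin_subset_topspace[OF Q(2)] .
    have gf: "g ` f ` W = W" if "W \<subseteq> topspace Y" for W
    proof -
      have "g ` f ` W = (\<lambda>w. g (f w)) ` W" by (simp add: image_image)
      also have "\<dots> = id ` W" using that F(3) by (intro image_cong) auto
      finally show ?thesis by simp
    qed
    have fg: "f ` g ` W = W" if "W \<subseteq> topspace S" for W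
    proof -
      have "f ` g ` W = (\<lambda>w. f (g w)) ` W" by (simp add: image_image)
      also have "\<dots> = id ` W" using that F(4) by (intro image_cong) auto
      finally show ?thesis by simp
    qed
    show "\<exists>K. K \<noteq> {} \<and> compactin Y K \<and> saturated_in Y K \<and> (\<forall>n. K \<subseteq> g ` U' n) \<and>
         (\<forall>W. openin Y W \<and> K \<subseteq> W \<longrightarrow> (\<exists>n. g ` U' n \<subseteq> W))"
    proof (rule exI[of _ "g ` Q"], intro conjI allI impI)
      show "g ` Q \<noteq> {}" using Q(1) by blast
      show "compactin Y (g ` Q)" by (rule image_compactin[OF Q(2) F(7)])
      fix n show "g ` Q \<subseteq> g ` U' n" using Q(4)[of n] by (rule image_mono)
    next
      have gQtop: "g ` Q \<subseteq> topspace Y" using Qtop F(2) by blast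
      show "saturated_in Y (g ` Q)"
        unfolding saturated_in_def
      proof (rule conjI)
        show "g ` Q \<subseteq> topspace Y" by (rule gQtop)
        show "g ` Q = \<Inter>{U. openin Y U \<and> g ` Q \<subseteq> U}"
        proof
          show "g ` Q \<subseteq> \<Inter>{U. openin Y U \<and> g ` Q \<subseteq> U}" by blast
        next
          show "\<Inter>{U. openin Y U \<and> g ` Q \<subseteq> U} \<subseteq> g ` Q"
          proof
            fix p assume p: "p \<in> \<Inter>{U. openin Y U \<and> g ` Q \<subseteq> U}"
            have ptop: "p \<in> topspace Y" using p gQtop by blast
            have "f p \<in> O2" if O2: "openin S O2" "Q \<subseteq> O2" for O2
            proof -
              have "openin Y (g ` O2)" using F(6) O2(1) by blast
              moreover have "g ` Q \<subseteq> g ` O2" using O2(2) by (rule image_mono)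
              ultimately have "p \<in> g ` O2" using p by blast
              then have "f p \<in> f ` g ` O2" by (rule imageI)
              then show "f p \<in> O2" using fg[OF openin_subset[OF O2(1)]] by simp
            qed
            then have "f p \<in> \<Inter>{U. openin S U \<and> Q \<subseteq> U}" by blast
            moreover have "Q = \<Inter>{U. openin S U \<and> Q \<subseteq> U}" using Q(3) unfolding saturated_in_def by blast
            ultimately have "f p \<in> Q" by simp
            then have "g (f p) \<in> g ` Q" by (rule imageI)
            then show "p \<in> g ` Q" using F(3)[OF ptop] by simp
          qed
        qed
      qed
    next
      fix W assume W: "openin Y W \<and> g ` Q \<subseteq> W"
      have Wtop: "W \<subseteq> topspace Y" using W openin_subset by blast
      have "openin S (f ` W)" using F(5) W by blast
      moreover have "Q \<subseteq> f ` W"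
      proof -
        have "f ` g ` Q \<subseteq> f ` W" using W by (intro image_mono) blast
        then show ?thesis using fg[OF Qtop] by simp
      qed
      ultimately obtain n where n: "U' n \<subseteq> f ` W" using Q(5) by blast
      have "g ` U' n \<subseteq> g ` f ` W" using n by (rule image_mono)
      then have "g ` U' n \<subseteq> W" using gf[OF Wtop] by simp
      then show "\<exists>n. g ` U' n \<subseteq> W" by blast
    qed
  qed
  then show ?thesis unfolding compactly_choquet_complete_def by blast
qed

theorem proposition9p1:
  fixes X :: "'a topology" and G :: "'b::order set"
    and Y :: "'c topology" and Z :: "'d topology" and H :: "'d set"
  shows "(continuous_dcpo TYPE('b) \<and> gdelta_in scott_topology G \<and>
            X homeomorphic_space subtopology scott_topology G
          \<longrightarrow> convergence_choquet_complete X) \<and>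
         (sober_space Z \<and> locally_compact_sat Z \<and> gdelta_in Z H \<and>
            Y homeomorphic_space subtopology Z H
          \<longrightarrow> compactly_choquet_complete Y)"
  using part1[of G X] part2[of Z H Y] by blast

end
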